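(* Let $X$ be a perfectly normal space and let $E\subseteq X$ be a subspace which is equiconnected. Suppose $E=\bigcup_{n=1}^\infty E_n$ where: (1) $E_n\cap E_m=\emptyset$ for $n\ne m$; (2) each $E_n$ is an ambiguous set in $E$; (3) each $E_n$ is a $B_1$-retract of $X$; (4) $E$ is a $G_\delta$-set in $X$. Then $E$ is a $B_1$-retract of $X$.
   Context: A function $f:X\to Y$ between topological spaces is a Baire-one function if it is the pointwise limit of a sequence of continuous functions $f_n:X\to Y$. A subset $E$ of $X$ (with the subspace topology) is a $B_1$-retract of $X$ if there exists a Baire-one function $r:X\to E$ with $r(x)=x$ for all $x\in E$. A subset of a topological space is ambiguous if it is simultaneously an $F_\sigma$-set and a $G_\delta$-set. A space is perfectly normal if it is normal and every closed subset is a $G_\delta$-set. A topological space $Y$ is equiconnected if there is a continuous $\gamma:Y\times Y\times[0,1]\to Y$ with $\gamma(y',y'',0)=y'$, $\gamma(y',y'',1)=y''$ and $\gamma(y',y',t)=y'$ for all $y',y''\in Y$, $t\in[0,1]$. *)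

theory Defs
  imports "HOL-Analysis.Analysis"
begin

definition perfectly_normal_space :: "'a topology \<Rightarrow> bool" where
  "perfectly_normal_space X \<equiv> normal_space X \<and> (\<forall>C. closedin X C \<longrightarrow> gdelta_in X C)"

definition ambiguous_in :: "'a topology \<Rightarrow> 'a set \<Rightarrow> bool" where
  "ambiguous_in X A \<equiv> fsigma_in X A \<and> gdelta_in X A"

definition baire_one_map :: "'a topology \<Rightarrow> 'b topology \<Rightarrow> ('a \<Rightarrow> 'b) \<Rightarrow> bool" where
  "baire_one_map X Y f \<equiv>
     \<exists>fs. (\<forall>n. continuous_map X Y (fs n)) \<and>
          (\<forall>x\<in>topspace X. limitin Y (\<lambda>n. fs n x) (f x) sequentially)"

definition B1_retract :: "'a topology \<Rightarrow> 'a set \<Rightarrow> bool" where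
  "B1_retract X E \<equiv> E \<subseteq> topspace X \<and>
     (\<exists>r. baire_one_map X (subtopology X E) r \<and> (\<forall>x\<in>E. r x = x))"

definition equiconnected_space :: "'a topology \<Rightarrow> bool" where
  "equiconnected_space Y \<equiv>
     \<exists>\<gamma> :: 'a \<times> 'a \<times> real \<Rightarrow> 'a.
       continuous_map (prod_topology Y (prod_topology Y (top_of_set {0..1}))) Y \<gamma> \<and>
       (\<forall>a\<in>topspace Y. \<forall>b\<in>topspace Y.
          \<gamma> (a, b, 0) = a \<and> \<gamma> (a, b, 1) = b \<and> (\<forall>t\<in>{0..1}. \<gamma> (a, a, t) = a))"

end

theory Submission
  imports Defs
begin

lemma finite_glue:
  fixes X :: "'a topology" and Y :: "'b topology" and m :: nat
  assumes nX: "normal_space X" and eq: "equiconnected_space Y"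
  shows "(\<And>i. i \<le> m \<Longrightarrow> closedin X (A i)) \<Longrightarrow>
         (\<And>i j. i \<le> m \<Longrightarrow> j \<le> m \<Longrightarrow> i \<noteq> j \<Longrightarrow> A i \<inter> A j = {}) \<Longrightarrow>
         (\<And>i. i \<le> m \<Longrightarrow> continuous_map X Y (u i)) \<Longrightarrow>
         \<exists>g. continuous_map X Y g \<and> (\<forall>i\<le>m. \<forall>x\<in>A i. g x = u i x)"
proof (induction m)
  case 0
  then show ?case by (intro exI[of _ "u 0"]) simp
next
  case (Suc m)
  obtain g where g: "continuous_map X Y g" "\<forall>i\<le>m. \<forall>x\<in>A i. g x = u i x"
  proof -
    have "\<exists>g. continuous_map X Y g \<and> (\<forall>i\<le>m. \<forall>x\<in>A i. g x = u i x)"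
      by (rule Suc.IH) (use Suc.prems in auto)
    then show ?thesis using that by blast
  qed
  obtain \<gamma> :: "'b \<times> 'b \<times> real \<Rightarrow> 'b" where
    gc: "continuous_map (prod_topology Y (prod_topology Y (top_of_set {0..1}))) Y \<gamma>" and
    gp: "\<And>a b. a\<in>topspace Y \<Longrightarrow> b\<in>topspace Y \<Longrightarrow> \<gamma> (a, b, 0) = a \<and> \<gamma> (a, b, 1) = b"
    using eq unfolding equiconnected_space_def by metis
  have cB: "closedin X (\<Union>i\<le>m. A i)"
  proof (rule closedin_Union)
    show "finite (A ` {..m})" by simp
    show "\<And>S. S \<in> A ` {..m} \<Longrightarrow> closedin X S" using Suc.prems(1) by force
  qed
  have dj: "disjnt (\<Union>i\<le>m. A i) (A (Suc m))"
    unfolding disjnt_def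
  proof -
    have H: "A i \<inter> A (Suc m) = {}" if "i \<le> m" for i
      using that by (intro Suc.prems(2)) simp_all
    show "(\<Union>i\<le>m. A i) \<inter> A (Suc m) = {}"
    proof (rule equals0I)
      fix x assume "x \<in> (\<Union>i\<le>m. A i) \<inter> A (Suc m)"
      then obtain i where "i \<le> m" "x \<in> A i" "x \<in> A (Suc m)" by blast
      then show False using H by blast
    qed
  qed
  obtain \<phi> where phi: "continuous_map X (top_of_set {0..1::real}) \<phi>"
     "\<phi> ` (\<Union>i\<le>m. A i) \<subseteq> {0}" "\<phi> ` A (Suc m) \<subseteq> {1}"
    using Urysohn_lemma[OF nX cB Suc.prems(1)[of "Suc m"] dj, of 0 1] by auto
  have uc: "continuous_map X Y (u (Suc m))" using Suc.prems(3) by auto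
  define g' where "g' x = \<gamma> (g x, u (Suc m) x, \<phi> x)" for x
  have "continuous_map X Y g'"
    unfolding g'_def
    by (rule continuous_map_compose[OF _ gc, unfolded o_def])
       (intro continuous_map_pairedI g uc phi)
  moreover have "\<forall>i\<le>Suc m. \<forall>x\<in>A i. g' x = u i x"
  proof (intro allI impI ballI)
    fix i x assume i: "i \<le> Suc m" and x: "x \<in> A i"
    have xt: "x \<in> topspace X" using x Suc.prems(1)[OF i] closedin_subset by blast
    have t1: "g x \<in> topspace Y" "u (Suc m) x \<in> topspace Y"
      using g(1) uc xt by (simp_all add: continuous_map_def Pi_iff)
    show "g' x = u i x"
    proof (cases "i = Suc m")
      case True
      then have "x \<in> A (Suc m)" using x by simp
      then have "\<phi> x \<in> {1}" using phi(3) by (meson image_subset_iff)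
      then have "\<phi> x = 1" by simp
      then show ?thesis using gp[OF t1] True by (simp add: g'_def)
    next
      case False
      then have "i \<le> m" using i by auto
      then have "x \<in> (\<Union>i\<le>m. A i)" using x by blast
      then have "\<phi> x \<in> {0}" using phi(2) by (meson image_subset_iff)
      then have "\<phi> x = 0" by simp
      have "g x = u i x" using g(2) \<open>i \<le> m\<close> x by blast
      then show ?thesis using gp[OF t1] \<open>\<phi> x = 0\<close> by (simp add: g'_def)
    qed
  qed
  ultimately show ?case by blast
qed


lemma fsigma_seq':
  assumes "fsigma_in X S"
  shows "\<exists>C::nat \<Rightarrow> 'a set. (\<forall>k. closedin X (C k)) \<and> (\<forall>k k'. k \<le> k' \<longrightarrow> C k \<subseteq> C k') \<and> (\<Union>k. C k) = S"
proof -
  obtain C where C: "\<forall>n. closedin X (C n)" "\<forall>n. C n \<subseteq> C (Suc n)" "\<Union> (range C) = S"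
    using assms unfolding fsigma_in_ascending by blast
  have "C k \<subseteq> C k'" if "k \<le> k'" for k k'
    using lift_Suc_mono_le[of C, OF _ that] C(2) by blast
  then show ?thesis using C by blast
qed

lemma baire_sub:
  assumes "baire_one_map X (subtopology X A) f" "A \<subseteq> E"
  obtains fs :: "nat \<Rightarrow> 'a \<Rightarrow> 'a" where "\<And>k. continuous_map X (subtopology X E) (fs k)"
    "\<And>x. x \<in> topspace X \<Longrightarrow> limitin (subtopology X E) (\<lambda>k. fs k x) (f x) sequentially"
proof -
  obtain fs where fs: "\<forall>n. continuous_map X (subtopology X A) (fs n)"
     "\<forall>x\<in>topspace X. limitin (subtopology X A) (\<lambda>n. fs n x) (f x) sequentially"
    using assms(1) unfolding baire_one_map_def by blast
  have "continuous_map X (subtopology X E) (fs k)" for k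
  proof -
    have "continuous_map X X (fs k)" "fs k ` topspace X \<subseteq> A"
      using fs(1) unfolding continuous_map_in_subtopology by blast+
    then show ?thesis unfolding continuous_map_in_subtopology using assms(2) by blast
  qed
  moreover have "limitin (subtopology X E) (\<lambda>k. fs k x) (f x) sequentially" if "x \<in> topspace X" for x
  proof -
    have L: "limitin (subtopology X A) (\<lambda>n. fs n x) (f x) sequentially" using fs(2) that by blast
    have "f x \<in> A" "eventually (\<lambda>k. fs k x \<in> A) sequentially" "limitin X (\<lambda>k. fs k x) (f x) sequentially"
      using L unfolding limitin_subtopology by auto
    moreover have "eventually (\<lambda>k. fs k x \<in> E) sequentially"
      using \<open>eventually (\<lambda>k. fs k x \<in> A) sequentially\<close> by (rule eventually_mono) (use assms(2) in blast)
    ultimately show ?thesis unfolding limitin_subtopology using assms(2) by blast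
  qed
  ultimately show ?thesis by (rule that)
qed


theorem theorem2p6:
  fixes X :: "'a topology" and E :: "'a set" and En :: "nat \<Rightarrow> 'a set"
  assumes "perfectly_normal_space X"
    and "E \<subseteq> topspace X"
    and "equiconnected_space (subtopology X E)"
    and "E = (\<Union>n. En n)"
    and "\<And>n m. n \<noteq> m \<Longrightarrow> En n \<inter> En m = {}"
    and "\<And>n. ambiguous_in (subtopology X E) (En n)"
    and "\<And>n. B1_retract X (En n)"
    and "gdelta_in X E"
  shows "B1_retract X E"
proof -
  note A = assms
  have nX: "normal_space X" and pgd: "\<And>C. closedin X C \<Longrightarrow> gdelta_in X C"
    using A(1) unfolding perfectly_normal_space_def by blast+
  have tE: "topspace (subtopology X E) = E" using A(2) by auto
  define S where "S n = topspace X - (E - En n)" for n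
  have Sfs: "fsigma_in X (S n)" for n
  proof -
    have "fsigma_in (subtopology X E) (En n)" using A(6) unfolding ambiguous_in_def by blast
    then have "gdelta_in (subtopology X E) (E - En n)"
      unfolding fsigma_in_gdelta_in tE by blast
    then have "gdelta_in X (E - En n)" using gdelta_in_gdelta_subtopology[OF A(8)] by blast
    moreover have "topspace X - S n = E - En n" using A(2) unfolding S_def by blast
    ultimately show ?thesis unfolding fsigma_in_gdelta_in S_def by auto
  qed
  have "\<forall>n. \<exists>C :: nat \<Rightarrow> 'a set. (\<forall>k. closedin X (C k)) \<and> (\<forall>k k'. k \<le> k' \<longrightarrow> C k \<subseteq> C k') \<and> (\<Union>k. C k) = S n"
    by (intro allI fsigma_seq'[OF Sfs])
  from choice[OF this] obtain D :: "nat \<Rightarrow> nat \<Rightarrow> 'a set" where D': "\<forall>n. (\<forall>k. closedin X (D n k)) \<and> (\<forall>k k'. k \<le> k' \<longrightarrow> D n k \<subseteq> D n k') \<and> (\<Union>k. D n k) = S n"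
    by (elim exE)
  have D: "\<And>n k. closedin X (D n k)" "\<And>n. (\<Union>k. D n k) = S n" using D' by simp_all
  define lab where "lab j = fst (prod_decode j)" for j
  define Z where "Z j = D (lab j) (snd (prod_decode j))" for j
  have Zc: "closedin X (Z j)" for j unfolding Z_def using D(1) by blast
  have ZS: "Z j \<subseteq> S (lab j)" for j unfolding Z_def using D(2) by blast
  have Zcov: "\<exists>j. x \<in> Z j" if "x \<in> topspace X" for x
  proof -
    have "\<exists>n. x \<in> S n"
    proof (cases "x \<in> E")
      case True
      then obtain n where "x \<in> En n" using A(4) by blast
      then show ?thesis unfolding S_def using that by blast
    next
      case False
      then show ?thesis unfolding S_def using that by blast
    qed
    then obtain n k where "x \<in> D n k" using D(2) by blast
    then have "x \<in> Z (prod_encode (n, k))" unfolding Z_def lab_def by simp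
    then show ?thesis by blast
  qed
  define Op where "Op j = topspace X - (\<Union>i<j. Z i)" for j
  have Ofs: "fsigma_in X (Op j)" for j
  proof -
    have c: "closedin X (\<Union>i<j. Z i)" using Zc by (intro closedin_Union) auto
    have "topspace X - Op j = (\<Union>i<j. Z i)" unfolding Op_def using Zc closedin_subset by blast
    then show ?thesis unfolding fsigma_in_gdelta_in Op_def using pgd[OF c] by auto
  qed
  have "\<forall>j. \<exists>C :: nat \<Rightarrow> 'a set. (\<forall>k. closedin X (C k)) \<and> (\<forall>k k'. k \<le> k' \<longrightarrow> C k \<subseteq> C k') \<and> (\<Union>k. C k) = Op j"
    by (intro allI fsigma_seq'[OF Ofs])
  from choice[OF this] obtain Q :: "nat \<Rightarrow> nat \<Rightarrow> 'a set" where Q': "\<forall>j. (\<forall>k. closedin X (Q j k)) \<and> (\<forall>k k'. k \<le> k' \<longrightarrow> Q j k \<subseteq> Q j k') \<and> (\<Union>k. Q j k) = Op j"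
    by (elim exE)
  have Q: "\<And>j k. closedin X (Q j k)" "\<And>j k k'. k \<le> k' \<Longrightarrow> Q j k \<subseteq> Q j k'"
      "\<And>j. (\<Union>k. Q j k) = Op j"
    using Q' by auto
  define C where "C j k = Z j \<inter> Q j k" for j k
  have Cc: "closedin X (C j k)" for j k unfolding C_def using Zc Q(1) by blast
  have Cdis: "C i k \<inter> C j k = {}" if "i \<noteq> j" for i j k
  proof -
    have "C a k \<inter> C b k = {}" if "a < b" for a b
    proof -
      have "C b k \<subseteq> Op b" unfolding C_def using Q(3)[of b] by blast
      moreover have "C a k \<subseteq> Z a" unfolding C_def by blast
      ultimately show ?thesis unfolding Op_def using that by blast
    qed
    then show ?thesis using that by (metis inf_commute linorder_neqE_nat)
  qed
  have "\<exists>(r :: 'a \<Rightarrow> 'a) (fs :: nat \<Rightarrow> 'a \<Rightarrow> 'a). (\<forall>k. continuous_map X (subtopology X E) (fs k)) \<and>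
      (\<forall>x\<in>topspace X. limitin (subtopology X E) (\<lambda>k. fs k x) (r x) sequentially) \<and>
      (\<forall>x\<in>En n. r x = x)" if "True" for n
  proof -
    obtain r where r: "baire_one_map X (subtopology X (En n)) r" "\<forall>x\<in>En n. r x = x"
      using A(7)[of n] unfolding B1_retract_def by blast
    have "En n \<subseteq> E" using A(4) by blast
    from baire_sub[OF r(1) this] obtain fs where
      "\<And>k. continuous_map X (subtopology X E) (fs k)"
      "\<And>x. x \<in> topspace X \<Longrightarrow> limitin (subtopology X E) (\<lambda>k. fs k x) (r x) sequentially"
      by blast
    then show ?thesis using r(2) by blast
  qed
  then have "\<forall>n. \<exists>p :: ('a \<Rightarrow> 'a) \<times> (nat \<Rightarrow> 'a \<Rightarrow> 'a). (\<forall>k. continuous_map X (subtopology X E) (snd p k)) \<and>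
      (\<forall>x\<in>topspace X. limitin (subtopology X E) (\<lambda>k. snd p k x) (fst p x) sequentially) \<and>
      (\<forall>x\<in>En n. fst p x = x)" by simp
  from choice[OF this] obtain P :: "nat \<Rightarrow> ('a \<Rightarrow> 'a) \<times> (nat \<Rightarrow> 'a \<Rightarrow> 'a)" where P: "\<forall>n. (\<forall>k. continuous_map X (subtopology X E) (snd (P n) k)) \<and>
      (\<forall>x\<in>topspace X. limitin (subtopology X E) (\<lambda>k. snd (P n) k x) (fst (P n) x) sequentially) \<and>
      (\<forall>x\<in>En n. fst (P n) x = x)" by blast
  define R where "R n = fst (P n)" for n
  define RS where "RS n = snd (P n)" for n
  have R: "\<And>n k. continuous_map X (subtopology X E) (RS n k)"
    "\<And>n x. x\<in>topspace X \<Longrightarrow> limitin (subtopology X E) (\<lambda>k. RS n k x) (R n x) sequentially"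
    "\<And>n x. x\<in>En n \<Longrightarrow> R n x = x"
    using P unfolding R_def RS_def by blast+
  have "\<forall>k. \<exists>g. continuous_map X (subtopology X E) g \<and> (\<forall>i\<le>k. \<forall>x\<in>C i k. g x = RS (lab i) k x)"
  proof
    fix k show "\<exists>g. continuous_map X (subtopology X E) g \<and> (\<forall>i\<le>k. \<forall>x\<in>C i k. g x = RS (lab i) k x)"
      by (rule finite_glue[OF nX A(3)]) (use Cc Cdis R(1) in auto)
  qed
  from choice[OF this] obtain g :: "nat \<Rightarrow> 'a \<Rightarrow> 'a" where g': "\<forall>k. continuous_map X (subtopology X E) (g k) \<and> (\<forall>i\<le>k. \<forall>x\<in>C i k. g k x = RS (lab i) k x)"
    by blast
  have g: "\<And>k. continuous_map X (subtopology X E) (g k)"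
    "\<And>k i x. i \<le> k \<Longrightarrow> x \<in> C i k \<Longrightarrow> g k x = RS (lab i) k x"
    using g' by blast+
  define J where "J x = (SOME j. x \<in> Z j \<and> x \<in> Op j)" for x
  have J: "x \<in> Z (J x) \<and> x \<in> Op (J x)" if xt: "x \<in> topspace X" for x
  proof -
    obtain j where j: "x \<in> Z j" using Zcov[OF xt] by blast
    define j0 where "j0 = (LEAST j. x \<in> Z j)"
    have "x \<in> Z j0" unfolding j0_def using j by (rule LeastI)
    moreover have "x \<in> Op j0" unfolding Op_def using xt not_less_Least j0_def by blast
    ultimately show ?thesis unfolding J_def by (rule someI[where x=j0, OF conjI])
  qed
  define r where "r x = R (lab (J x)) x" for x
  have "baire_one_map X (subtopology X E) r"
    unfolding baire_one_map_def
  proof (intro exI[of _ g] conjI allI ballI)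
    fix k show "continuous_map X (subtopology X E) (g k)" by (rule g(1))
  next
    fix x assume x: "x \<in> topspace X"
    define j where "j = J x"
    have "x \<in> Op j" "x \<in> Z j" using J[OF x] unfolding j_def by blast+
    then obtain K where K: "x \<in> Q j K" using Q(3)[of j] by blast
    have "eventually (\<lambda>k. RS (lab j) k x = g k x) sequentially"
      unfolding eventually_sequentially
    proof (intro exI[of _ "max j K"] allI impI)
      fix k assume "max j K \<le> k"
      then have "j \<le> k" "x \<in> C j k" using K Q(2)[of K k j] \<open>x \<in> Z j\<close> unfolding C_def by auto
      then show "RS (lab j) k x = g k x" using g(2) by metis
    qed
    then show "limitin (subtopology X E) (\<lambda>k. g k x) (r x) sequentially"
      using R(2)[OF x, of "lab j"] unfolding r_def j_def
      by (rule limitin_transform_eventually)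
  qed
  moreover have "\<forall>x\<in>E. r x = x"
  proof
    fix x assume x: "x \<in> E"
    then have xt: "x \<in> topspace X" using A(2) by blast
    have "x \<in> S (lab (J x))" using J[OF xt] ZS by blast
    then have "x \<in> En (lab (J x))" using x unfolding S_def by blast
    then show "r x = x" unfolding r_def by (rule R(3))
  qed
  ultimately show ?thesis unfolding B1_retract_def using A(2) by blast
qed

end
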